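(* Let $u,v>0$ and $0<a,b\le 1$, and consider the map $(x,y)\mapsto\big((1-a)x+auy(1-y),\ (1-b)y+bvx(1-x)\big)$ on $\mathbb{R}^2$. If $uv\ge 1$, then every (real) equilibrium $(x^*,y^* )$ of this map lies in $[0,1]\times[0,1]$.
   Context: An equilibrium of the map is a real fixed point $(x^*,y^* )$; equivalently (since $a,b>0$) a real solution of $x^*=uy^*(1-y^* )$, $y^*=vx^*(1-x^* )$. This is Kopel's duopoly map. *)

theory Defs
  imports Complex_Main
begin

definition kopel_map :: "real \<Rightarrow> real \<Rightarrow> real \<Rightarrow> real \<Rightarrow> real \<times> real \<Rightarrow> real \<times> real" where
  "kopel_map u v a b = (\<lambda>(x, y). ((1 - a) * x + a * u * y * (1 - y), (1 - b) * y + b * v * x * (1 - x)))"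

end

theory Submission
  imports Defs
begin

lemma neg_case:
  fixes u v x y :: real
  assumes "u > 0" "v > 0" "u * v \<ge> 1" "x = u * y * (1 - y)" "y = v * x * (1 - x)"
  shows "x \<ge> 0"
proof (rule ccontr)
  assume "\<not> x \<ge> 0"
  hence hx: "x < 0" by simp
  have "x * (1 - x) < 0" using hx by (simp add: mult_neg_pos)
  hence hy: "y < 0" using assms(2,5) by (simp add: mult_pos_neg mult.assoc)
  have h1: "-y > v * (-x)"
  proof -
    have "-y = v * (-x) * (1 - x)" using assms(5) by simp
    moreover have "v * (-x) * (1 - x) > v * (-x) * 1"
      using hx assms(2) by (intro mult_strict_left_mono) (auto simp: mult_pos_neg)
    ultimately show ?thesis by simp
  qed
  have h2: "-x > u * (-y)"
  proof -
    have "-x = u * (-y) * (1 - y)" using assms(4) by simp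
    moreover have "u * (-y) * (1 - y) > u * (-y) * 1"
      using hy assms(1) by (intro mult_strict_left_mono) (auto simp: mult_pos_neg)
    ultimately show ?thesis by simp
  qed
  have "u * (-y) > u * (v * (-x))" using h1 assms(1) by simp
  hence "-x > (u * v) * (-x)" using h2 by (simp add: mult.assoc)
  moreover have "(u * v) * (-x) \<ge> 1 * (-x)" using assms(3) hx
    by (intro mult_right_mono) auto
  ultimately show False by simp
qed

theorem proposition1:
  fixes u v a b x y :: real
  assumes "u > 0" and "v > 0" and "0 < a" and "a \<le> 1" and "0 < b" and "b \<le> 1"
    and "u * v \<ge> 1"
    and "kopel_map u v a b (x, y) = (x, y)"
  shows "x \<in> {0..1} \<and> y \<in> {0..1}"
proof -
  have e1: "(1 - a) * x + a * u * y * (1 - y) = x"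
   and e2: "(1 - b) * y + b * v * x * (1 - x) = y"
    using assms(8) by (auto simp: kopel_map_def)
  have "a * (u * y * (1 - y)) = a * x" using e1 by (simp add: algebra_simps)
  hence fx: "x = u * y * (1 - y)" using assms(3) by simp
  have "b * (v * x * (1 - x)) = b * y" using e2 by (simp add: algebra_simps)
  hence fy: "y = v * x * (1 - x)" using assms(5) by simp
  have x0: "x \<ge> 0" using neg_case[OF assms(1,2,7) fx fy] .
  have uv: "v * u \<ge> 1" using assms(7) by (simp add: mult.commute)
  have y0: "y \<ge> 0" by (rule neg_case[OF assms(2,1) uv fy fx])
  have x1: "x \<le> 1"
  proof (rule ccontr)
    assume "\<not> x \<le> 1"
    hence "x * (1 - x) < 0" by (simp add: mult_pos_neg)
    hence "y < 0" using fy assms(2) by (simp add: mult_pos_neg mult.assoc)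
    thus False using y0 by simp
  qed
  have y1: "y \<le> 1"
  proof (rule ccontr)
    assume "\<not> y \<le> 1"
    hence "y * (1 - y) < 0" by (simp add: mult_pos_neg)
    hence "x < 0" using fx assms(1) by (simp add: mult_pos_neg mult.assoc)
    thus False using x0 by simp
  qed
  show ?thesis using x0 x1 y0 y1 by simp
qed

end
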